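(* Let $m_1,m_2,c_1,c_2,k_1,k_2>0$ and put $m=m_1+m_2$, $c=c_1+c_2$, $k=k_1+k_2$. Consider the switched system on $\mathbb{R}^4$ with state $x=(x_1,x_2,x_3,x_4)$, given by $E_{\sigma(t)}\dot x=A_{\sigma(t)}x$ with $\sigma(t)\in\{1,2\}$ and $$E_1=\mathrm{diag}(1,m_1,1,m_2),\quad A_1=\begin{bmatrix}0&1&0&0\\-k_1&-c_1&0&0\\0&0&0&1\\0&0&-k_2&-c_2\end{bmatrix},\quad E_2=\mathrm{diag}(1,m,1,0),\quad A_2=\begin{bmatrix}0&1&0&0\\-k&-c&0&0\\0&0&0&1\\-1&0&1&0\end{bmatrix},$$ with the following switching rules: a switch from mode 2 to mode 1 may occur at any time and then $x(t_*^+)=x(t_*^-)$; a switch from mode 1 to mode 2 at time $t_*$ may occur only if $x_1(t_*^-)=x_3(t_*^-)$, and then $x_1(t_*^+)=x_3(t_*^+)=x_1(t_*^-)$ and $x_2(t_*^+)=x_4(t_*^+)=\frac{m_1x_2(t_*^-)+m_2x_4(t_*^-)}{m}$. Then this switched system is globally uniformly exponentially stable about zero.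
   Context: This models two spring–mass–damper systems (masses $m_1,m_2$, damping $c_1,c_2$, stiffness $k_1,k_2$, displacements $x_1=q_1$, $x_3=q_2$, velocities $x_2,x_4$) that may lock together (mode 2) with conservation of momentum at lock-up, or move independently (mode 1). Switched descriptor system: the switching signal $\sigma$ is piecewise constant with finitely many discontinuities in every bounded interval; a solution $x(\cdot)$ is differentiable and satisfies $E_{\sigma(t)}\dot x(t)=A_{\sigma(t)}x(t)$ at every $t$ where $\sigma$ is continuous, with one-sided limits $x(t_*^\pm)$ at discontinuities of $\sigma$, where the stated switching rules hold (the differential equation is not required at switching instants). GUES means there exist $\beta,\alpha>0$ such that every solution satisfies $\|x(t)\|\le\beta e^{-\alpha(t-t_0)}\|x(t_0)\|$ for all $t\ge t_0$. *)

theory Defs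
  imports "HOL-Analysis.Analysis"
begin

definition EE :: "real \<Rightarrow> real \<Rightarrow> nat \<Rightarrow> real^4^4" where
  "EE m1 m2 i =
     (if i = 1 then vector [vector [1,0,0,0], vector [0,m1,0,0], vector [0,0,1,0], vector [0,0,0,m2]]
      else vector [vector [1,0,0,0], vector [0,m1+m2,0,0], vector [0,0,1,0], vector [0,0,0,0]])"

definition AA :: "real \<Rightarrow> real \<Rightarrow> real \<Rightarrow> real \<Rightarrow> nat \<Rightarrow> real^4^4" where
  "AA c1 c2 k1 k2 i =
     (if i = 1 then vector [vector [0,1,0,0], vector [-k1,-c1,0,0], vector [0,0,0,1], vector [0,0,-k2,-c2]]
      else vector [vector [0,1,0,0], vector [-(k1+k2),-(c1+c2),0,0], vector [0,0,0,1], vector [-1,0,1,0]])"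

text \<open>Switching rule for a switch from mode i (just before) to mode j (just after),
  with xm = x(t*^-) and xp = x(t*^+).\<close>

definition switch_rule :: "real \<Rightarrow> real \<Rightarrow> nat \<Rightarrow> nat \<Rightarrow> real^4 \<Rightarrow> real^4 \<Rightarrow> bool" where
  "switch_rule m1 m2 i j xm xp \<longleftrightarrow>
     (i = 2 \<and> j = 1 \<longrightarrow> xp = xm) \<and>
     (i = 1 \<and> j = 2 \<longrightarrow>
        xm$1 = xm$3 \<and> xp$1 = xm$1 \<and> xp$3 = xm$1 \<and>
        xp$2 = (m1 * xm$2 + m2 * xm$4) / (m1 + m2) \<and>
        xp$4 = (m1 * xm$2 + m2 * xm$4) / (m1 + m2))"

text \<open>Solutions on [t0, \<infinity>).  The switching signal is normalised to be right-continuous,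
  and the state at a switching instant is its right limit x(t*^+).\<close>

definition is_solution ::
  "real \<Rightarrow> real \<Rightarrow> real \<Rightarrow> real \<Rightarrow> real \<Rightarrow> real \<Rightarrow> real \<Rightarrow> (real \<Rightarrow> nat) \<Rightarrow> (real \<Rightarrow> real^4) \<Rightarrow> bool" where
  "is_solution m1 m2 c1 c2 k1 k2 t0 \<sigma> x \<longleftrightarrow>
     (\<forall>t\<ge>t0. \<sigma> t \<in> {1, 2}) \<and>
     (\<forall>t\<ge>t0. eventually (\<lambda>s. \<sigma> s = \<sigma> t) (at_right t)) \<and>
     (\<forall>T. finite {t. t0 < t \<and> t \<le> T \<and> \<not> isCont \<sigma> t}) \<and>
     (\<forall>t\<ge>t0. (t = t0 \<or> isCont \<sigma> t) \<longrightarrow>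
        (\<exists>x'. (x has_vector_derivative x') (at t within {t0..}) \<and>
              EE m1 m2 (\<sigma> t) *v x' = AA c1 c2 k1 k2 (\<sigma> t) *v x t)) \<and>
     (\<forall>t>t0. \<not> isCont \<sigma> t \<longrightarrow>
        (\<exists>xm. (x \<longlongrightarrow> xm) (at_left t) \<and> (x \<longlongrightarrow> x t) (at_right t) \<and>
              (\<forall>i. eventually (\<lambda>s. \<sigma> s = i) (at_left t) \<longrightarrow>
                   switch_rule m1 m2 i (\<sigma> t) xm (x t))))"

definition GUES :: "real \<Rightarrow> real \<Rightarrow> real \<Rightarrow> real \<Rightarrow> real \<Rightarrow> real \<Rightarrow> bool" where
  "GUES m1 m2 c1 c2 k1 k2 \<longleftrightarrow>
     (\<exists>\<beta>>0. \<exists>\<alpha>>0. \<forall>t0 \<sigma> x. is_solution m1 m2 c1 c2 k1 k2 t0 \<sigma> x \<longrightarrow>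
        (\<forall>t\<ge>t0. norm (x t) \<le> \<beta> * exp (- \<alpha> * (t - t0)) * norm (x t0)))"

end

theory Submission
  imports Defs
begin


definition V :: "real \<Rightarrow> real \<Rightarrow> real \<Rightarrow> real \<Rightarrow> real \<Rightarrow> real" where
  "V m k e p z = k*p^2/2 + m*z^2/2 + e*m*p*z"

lemma osc:
  fixes m c k e p z :: real
  assumes m: "0 < m" and c: "0 < c" and k: "0 < k" and e: "0 < e" "e \<le> 1"
    and h1: "4*m*e \<le> k" and h2: "4*m*e \<le> c" and h3: "2*c*e \<le> k"
  shows "k*p^2 + m*z^2 \<le> 4 * V m k e p z"
    and "4 * V m k e p z \<le> 3*(k*p^2 + m*z^2)"
    and "k*p*z + z*(-k*p - c*z) + e*m*z^2 + e*p*(-k*p - c*z) \<le> -(e/2)*(k*p^2 + m*z^2)"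
proof -
  have q: "4*e^2*m \<le> k"
  proof -
    have "4*e^2*m = e*(4*m*e)" by (simp add: power2_eq_square)
    also have "\<dots> \<le> 1*(4*m*e)" using e m by (intro mult_right_mono) auto
    finally show ?thesis using h1 by simp
  qed
  have A: "0 \<le> k*p^2 + m*z^2 + 4*e*m*p*z" "0 \<le> k*p^2 + m*z^2 - 4*e*m*p*z"
  proof -
    have id1: "m*(k*p^2 + m*z^2 + 4*e*m*p*z) = (m*z + 2*e*m*p)^2 + m*(k - 4*e^2*m)*p^2"
      by (simp add: power2_eq_square algebra_simps)
    have id2: "m*(k*p^2 + m*z^2 - 4*e*m*p*z) = (m*z - 2*e*m*p)^2 + m*(k - 4*e^2*m)*p^2"
      by (simp add: power2_eq_square algebra_simps)
    have "0 \<le> m*(k - 4*e^2*m)*p^2" using m q by simp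
    then have "0 \<le> m*(k*p^2 + m*z^2 + 4*e*m*p*z)" "0 \<le> m*(k*p^2 + m*z^2 - 4*e*m*p*z)"
      unfolding id1 id2 by simp_all
    then show "0 \<le> k*p^2 + m*z^2 + 4*e*m*p*z" "0 \<le> k*p^2 + m*z^2 - 4*e*m*p*z"
      using m by (simp_all add: zero_le_mult_iff)
  qed
  show "k*p^2 + m*z^2 \<le> 4 * V m k e p z" using A(1) by (simp add: V_def algebra_simps)
  show "4 * V m k e p z \<le> 3*(k*p^2 + m*z^2)" using A(2) by (simp add: V_def algebra_simps)
  have coef: "0 \<le> k*c - 3/2*e*m*k - e*c^2/2"
  proof -
    have f1: "e*m*k \<le> k*c/4" using mult_right_mono[OF h2, of k] k by (simp add: algebra_simps)
    have f2: "e*c^2 \<le> k*c/2" using mult_right_mono[OF h3, of c] c by (simp add: algebra_simps power2_eq_square)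
    have f3: "0 < k*c" using k c by simp
    show ?thesis using f1 f2 f3 by linarith
  qed
  have "k*((-(e/2)*(k*p^2 + m*z^2)) - (k*p*z + z*(-k*p - c*z) + e*m*z^2 + e*p*(-k*p - c*z)))
        = (e/2)*(k*p + c*z)^2 + (k*c - 3/2*e*m*k - e*c^2/2)*z^2"
    by (simp add: power2_eq_square algebra_simps)
  moreover have "0 \<le> (e/2)*(k*p + c*z)^2 + (k*c - 3/2*e*m*k - e*c^2/2)*z^2"
    using e coef by simp
  ultimately have "0 \<le> k*((-(e/2)*(k*p^2 + m*z^2)) - (k*p*z + z*(-k*p - c*z) + e*m*z^2 + e*p*(-k*p - c*z)))"
    by simp
  then show "k*p*z + z*(-k*p - c*z) + e*m*z^2 + e*p*(-k*p - c*z) \<le> -(e/2)*(k*p^2 + m*z^2)"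
    using k by (simp add: zero_le_mult_iff)
qed

lemma jumpineq:
  fixes m1 m2 :: real assumes "0 < m1" "0 < m2"
  shows "(m1+m2) * ((m1*p + m2*q)/(m1+m2))^2 \<le> m1*p^2 + m2*q^2"
proof -
  define w where "w = (m1*p + m2*q)/(m1+m2)"
  have X: "m1*p + m2*q = (m1+m2)*w" using assms by (simp add: w_def)
  have "m1*p^2 + m2*q^2 - (m1+m2)*w^2 = m1*(p-w)^2 + m2*(q-w)^2 + 2*w*((m1*p+m2*q) - (m1+m2)*w)"
    by (simp add: power2_eq_square algebra_simps)
  also have "\<dots> = m1*(p-w)^2 + m2*(q-w)^2" by (simp only: X diff_self mult_zero_right add_0_right)
  also have "\<dots> \<ge> 0" using assms by simp
  finally show ?thesis unfolding w_def[symmetric] by simp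
qed

lemma isCont_nat: "isCont (\<sigma>::real\<Rightarrow>nat) t \<longleftrightarrow> eventually (\<lambda>s. \<sigma> s = \<sigma> t) (at t)"
proof
  assume "isCont \<sigma> t"
  then show "eventually (\<lambda>s. \<sigma> s = \<sigma> t) (at t)"
  proof -
    have "open {\<sigma> t}" by (rule open_discrete)
    moreover have "(\<sigma> \<longlongrightarrow> \<sigma> t) (at t)" using \<open>isCont \<sigma> t\<close> by (simp add: continuous_at)
    ultimately have "eventually (\<lambda>s. \<sigma> s \<in> {\<sigma> t}) (at t)" unfolding tendsto_def by blast
    then show ?thesis by simp
  qed
next
  assume "eventually (\<lambda>s. \<sigma> s = \<sigma> t) (at t)"
  then show "isCont \<sigma> t" unfolding continuous_at by (rule tendsto_eventually)
qed

lemma natdist: "(a::nat) \<noteq> b \<Longrightarrow> 1 \<le> \<bar>real a - real b\<bar>"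
proof (cases "a < b")
  case True
  then have "real (a+1) \<le> real b" by (subst of_nat_le_iff) simp
  then show ?thesis by simp
next
  case False
  assume "a \<noteq> b"
  with False have "real (b+1) \<le> real a" by (subst of_nat_le_iff) simp
  then show ?thesis by simp
qed



lemma seg_mono:
  fixes g :: "real \<Rightarrow> real"
  assumes "a \<le> s" "s \<le> T"
  and noP: "\<And>u. s < u \<Longrightarrow> u \<le> T \<Longrightarrow> \<not> P u"
  and der: "\<And>t. t \<ge> a \<Longrightarrow> (t = a \<or> \<not> P t) \<Longrightarrow> \<exists>d. (g has_real_derivative d) (at t within {a..}) \<and> d \<le> 0"
  and sc: "s = a \<or> (g \<longlongrightarrow> g s) (at_right s)"
  shows "g T \<le> g s"
proof (rule DERIV_nonpos_imp_decreasing_open[OF \<open>s \<le> T\<close>])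
  fix x assume x: "s < x" "x < T"
  then obtain d where d: "(g has_real_derivative d) (at x within {a..})" "d \<le> 0"
    using der[of x] noP[of x] assms(1) by force
  have "at x within {a..} = at x" using x assms(1) by (intro at_within_interior) auto
  with d show "\<exists>y. (g has_real_derivative y) (at x) \<and> y \<le> 0" by auto
next
  show "continuous_on {s..T} g"
    unfolding continuous_on_eq_continuous_within
  proof
    fix u assume u: "u \<in> {s..T}"
    show "continuous (at u within {s..T}) g"
    proof (cases "u = s \<and> s \<noteq> a")
      case True
      with sc have r: "(g \<longlongrightarrow> g s) (at_right s)" by auto
      show ?thesis
      proof (cases "s = T")
        case True then show ?thesis using u \<open>u = s \<and> s \<noteq> a\<close> by (simp add: continuous_within at_within_def)
      next
        case False
        then have "at s within {s..T} = at_right s" using assms by (intro at_within_Icc_at_right) auto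
        with r True show ?thesis by (simp add: continuous_within)
      qed
    next
      case False
      then have "u = a \<or> \<not> P u" using u noP[of u] by (cases "u = s") auto
      then obtain d where "(g has_real_derivative d) (at u within {a..})"
        using der[of u] u assms(1) by force
      then have "continuous (at u within {a..}) g" by (rule DERIV_continuous)
      then show ?thesis by (rule continuous_within_subset) (use assms(1) in auto)
    qed
  qed
qed

lemma jump_mono:
  fixes g :: "real \<Rightarrow> real"
  assumes fin: "\<And>T. finite {t. a < t \<and> t \<le> T \<and> P t}"
  and der: "\<And>t. t \<ge> a \<Longrightarrow> (t = a \<or> \<not> P t) \<Longrightarrow> \<exists>d. (g has_real_derivative d) (at t within {a..}) \<and> d \<le> 0"
  and jmp: "\<And>t. t > a \<Longrightarrow> P t \<Longrightarrow> (g \<longlongrightarrow> g t) (at_right t) \<and> (\<exists>L. (g \<longlongrightarrow> L) (at_left t) \<and> g t \<le> L)"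
  shows "t \<ge> a \<Longrightarrow> g t \<le> g a"
proof (induction "card {u. a < u \<and> u \<le> t \<and> P u}" arbitrary: t rule: less_induct)
  case less
  define D where "D = {u. a < u \<and> u \<le> t \<and> P u}"
  have fD: "finite D" unfolding D_def by (rule fin)
  show ?case
  proof (cases "D = {}")
    case True
    show ?thesis
    proof (rule seg_mono[where a=a and g=g and P=P and s=a and T=t])
      show "a \<le> a" "a \<le> t" using less.prems by auto
      show "\<not> P u" if "a < u" "u \<le> t" for u
        using True that unfolding D_def by blast
    qed (fact der | simp)+
  next
    case False
    define s where "s = Max D"
    have sD: "s \<in> D" using False fD s_def by (simp add: Max_in)
    have smax: "\<And>u. u \<in> D \<Longrightarrow> u \<le> s" using fD s_def by (simp add: Max_ge)
    have s: "a < s" "s \<le> t" "P s" using sD by (auto simp: D_def)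
    obtain L where L: "(g \<longlongrightarrow> g s) (at_right s)" "(g \<longlongrightarrow> L) (at_left s)" "g s \<le> L"
      using jmp[OF s(1) s(3)] by blast
    have "g t \<le> g s"
    proof (rule seg_mono[where a=a and g=g and P=P and s=s and T=t])
      show "a \<le> s" "s \<le> t" using s(1,2) by linarith+
      show "\<not> P u" if "s < u" "u \<le> t" for u
      proof
        assume "P u"
        then have "u \<in> D" using that s unfolding D_def by auto
        then show False using smax[of u] that by linarith
      qed
      show "s = a \<or> (g \<longlongrightarrow> g s) (at_right s)" using L by auto
    qed (fact der)
    moreover have "L \<le> g a"
    proof (rule tendsto_upperbound[OF L(2)])
      show "\<forall>\<^sub>F u in at_left s. g u \<le> g a"
        using eventually_at_left_real[OF s(1)]
      proof eventually_elim
        case (elim u)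
        have u: "a < u" "u < s" using elim by auto
        have sub1: "{v. a < v \<and> v \<le> u \<and> P v} \<subseteq> D"
          unfolding D_def using u s(2) by auto
        have sub2: "s \<notin> {v. a < v \<and> v \<le> u \<and> P v}" using u by auto
        have sub: "{v. a < v \<and> v \<le> u \<and> P v} \<subset> D"
          using sub1 sub2 sD by blast
        have "card {v. a < v \<and> v \<le> u \<and> P v} < card D"
          by (rule psubset_card_mono[OF fD sub])
        then show ?case using less.hyps[of u] u unfolding D_def by linarith
      qed
    qed simp
    ultimately show ?thesis using L(3) by linarith
  qed
qed



lemma comp_der: "(x has_vector_derivative x') F \<Longrightarrow> ((\<lambda>s. x s $ i) has_real_derivative x' $ i) F"
  using bounded_linear.has_vector_derivative[OF bounded_linear_vec_nth[of i]]
  by (simp add: has_real_derivative_iff_has_vector_derivative)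

lemma Ici_not_bot: "at (s::real) within {t0..} \<noteq> bot" if "t0 \<le> s"
proof
  assume "at s within {t0..} = bot"
  moreover have "at_right s \<le> at s within {t0..}" by (rule at_le) (use that in auto)
  ultimately show False by (simp add: bot_unique)
qed

lemma deriv_unique_Ici:
  assumes "t0 \<le> s" "(f has_real_derivative a) (at s within {t0..})" "(f has_real_derivative b) (at s within {t0..})"
  shows "a = b"
  using vector_derivative_unique_within[OF Ici_not_bot[OF assms(1)]] assms(2,3)
  by (simp add: has_real_derivative_iff_has_vector_derivative)

lemma E1: "(EE m1 m2 1 *v y) $ 1 = y$1" "(EE m1 m2 1 *v y) $ 2 = m1 * y$2"
  "(EE m1 m2 1 *v y) $ 3 = y$3" "(EE m1 m2 1 *v y) $ 4 = m2 * y$4"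
  by (simp_all add: EE_def matrix_vector_mult_def sum_4 vector_def)
lemma E2: "(EE m1 m2 2 *v y) $ 1 = y$1" "(EE m1 m2 2 *v y) $ 2 = (m1+m2) * y$2"
  "(EE m1 m2 2 *v y) $ 3 = y$3" "(EE m1 m2 2 *v y) $ 4 = 0"
  by (simp_all add: EE_def matrix_vector_mult_def sum_4 vector_def)
lemma A1: "(AA c1 c2 k1 k2 1 *v y) $ 1 = y$2" "(AA c1 c2 k1 k2 1 *v y) $ 2 = -k1*y$1 - c1*y$2"
  "(AA c1 c2 k1 k2 1 *v y) $ 3 = y$4" "(AA c1 c2 k1 k2 1 *v y) $ 4 = -k2*y$3 - c2*y$4"
  by (simp_all add: AA_def matrix_vector_mult_def sum_4 vector_def)
lemma A2: "(AA c1 c2 k1 k2 2 *v y) $ 1 = y$2" "(AA c1 c2 k1 k2 2 *v y) $ 2 = -(k1+k2)*y$1 - (c1+c2)*y$2"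
  "(AA c1 c2 k1 k2 2 *v y) $ 3 = y$4" "(AA c1 c2 k1 k2 2 *v y) $ 4 = y$3 - y$1"
  by (simp_all add: AA_def matrix_vector_mult_def sum_4 vector_def algebra_simps)

lemma sigma_nbhd:
  assumes sol: "is_solution m1 m2 c1 c2 k1 k2 t0 \<sigma> x" and t: "t0 \<le> t" "t = t0 \<or> isCont \<sigma> t"
  shows "\<exists>d>0. \<forall>s. t0 \<le> s \<and> dist s t < d \<longrightarrow> \<sigma> s = \<sigma> t"
proof (cases "t = t0")
  case True
  from sol t have "eventually (\<lambda>s. \<sigma> s = \<sigma> t) (at_right t)" unfolding is_solution_def by auto
  then obtain b where b: "b > t" "\<forall>y>t. y < b \<longrightarrow> \<sigma> y = \<sigma> t" by (auto simp: eventually_at_right_field)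
  show ?thesis
  proof (intro exI[of _ "b - t"] conjI allI impI)
    show "0 < b - t" using b by simp
    fix s assume s: "t0 \<le> s \<and> dist s t < b - t"
    show "\<sigma> s = \<sigma> t"
    proof (cases "s = t")
      case False
      then have "t < s" "s < b" using s True by (auto simp: dist_real_def)
      then show ?thesis using b by auto
    qed simp
  qed
next
  case False
  then have "isCont \<sigma> t" using t by auto
  then have "eventually (\<lambda>s. \<sigma> s = \<sigma> t) (at t)" by (simp add: isCont_nat)
  then obtain d where d: "d>0" "\<forall>y. y \<noteq> t \<and> dist y t < d \<longrightarrow> \<sigma> y = \<sigma> t"
    by (auto simp: eventually_at)
  show ?thesis
  proof (intro exI[of _ d] conjI allI impI)
    fix s assume s: "t0 \<le> s \<and> dist s t < d"
    show "\<sigma> s = \<sigma> t" using d s by (cases "s = t") auto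
  qed (use d in auto)
qed

lemma cont_inside:
  assumes d: "\<forall>s. t0 \<le> s \<and> dist s t < d \<longrightarrow> \<sigma> s = c" and s: "t0 < s" "dist s t < d"
  shows "isCont (\<sigma>::real\<Rightarrow>nat) s"
proof -
  define d' where "d' = min (d - dist s t) (s - t0)"
  have "d' > 0" using s by (simp add: d'_def)
  have "\<forall>y. y \<noteq> s \<and> dist y s < d' \<longrightarrow> \<sigma> y = \<sigma> s"
  proof (intro allI impI)
    fix y assume y: "y \<noteq> s \<and> dist y s < d'"
    have "dist y t < d" using y dist_triangle[of y t s] by (simp add: d'_def)
    moreover have "t0 \<le> y" using y by (auto simp: d'_def dist_real_def)
    ultimately have "\<sigma> y = c" using d by auto
    moreover have "\<sigma> s = c" using d s by auto
    ultimately show "\<sigma> y = \<sigma> s" by simp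
  qed
  then have "eventually (\<lambda>y. \<sigma> y = \<sigma> s) (at s)"
    unfolding eventually_at using \<open>d' > 0\<close> by auto
  then show ?thesis by (simp add: isCont_nat)
qed

lemma sol_der:
  assumes sol: "is_solution m1 m2 c1 c2 k1 k2 t0 \<sigma> x" and "t0 \<le> s" "s = t0 \<or> isCont \<sigma> s"
  shows "\<exists>x'. (x has_vector_derivative x') (at s within {t0..}) \<and>
              EE m1 m2 (\<sigma> s) *v x' = AA c1 c2 k1 k2 (\<sigma> s) *v x s"
  using assms unfolding is_solution_def by blast

lemma mode2_nbhd:
  assumes sol: "is_solution m1 m2 c1 c2 k1 k2 t0 \<sigma> x" and t: "t0 \<le> t" "t = t0 \<or> isCont \<sigma> t"
    and s2: "\<sigma> t = 2"
  shows "\<exists>d>0. \<forall>s. t0 \<le> s \<and> dist s t < d \<longrightarrow> x s$3 = x s$1 \<and> x s$4 = x s$2"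
proof -
  obtain d where d: "d > 0" "\<forall>s. t0 \<le> s \<and> dist s t < d \<longrightarrow> \<sigma> s = 2"
    using sigma_nbhd[OF sol t] s2 by auto
  have ok: "s = t0 \<or> isCont \<sigma> s" if "t0 \<le> s" "dist s t < d" for s
    using cont_inside[OF d(2), of s] that by force
  have der: "\<exists>x'. (x has_vector_derivative x') (at s within {t0..}) \<and>
              EE m1 m2 2 *v x' = AA c1 c2 k1 k2 2 *v x s" if "t0 \<le> s" "dist s t < d" for s
    using sol_der[OF sol that(1) ok[OF that]] d that by auto
  have eq3: "x s$3 = x s$1" if a: "t0 \<le> s" "dist s t < d" for s
  proof -
    obtain x' where "EE m1 m2 2 *v x' = AA c1 c2 k1 k2 2 *v x s" using der[OF a] by blast
    then have "(EE m1 m2 2 *v x') $ 4 = (AA c1 c2 k1 k2 2 *v x s) $ 4" by simp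
    then show ?thesis by (simp add: E2 A2)
  qed
  show ?thesis
  proof (intro exI[of _ d] conjI allI impI)
    fix s assume s: "t0 \<le> s \<and> dist s t < d"
    show "x s$3 = x s$1" using eq3 s by auto
    obtain x' where x': "(x has_vector_derivative x') (at s within {t0..})"
      "EE m1 m2 2 *v x' = AA c1 c2 k1 k2 2 *v x s" using der s by auto
    have r1: "x'$1 = x s$2" using arg_cong[OF x'(2), of "\<lambda>v. v$1"] by (simp add: E2 A2)
    have r3: "x'$3 = x s$4" using arg_cong[OF x'(2), of "\<lambda>v. v$3"] by (simp add: E2 A2)
    have d1: "((\<lambda>u. x u$3 - x u$1) has_real_derivative (x'$3 - x'$1)) (at s within {t0..})"
      by (intro derivative_intros comp_der x'(1))
    have d0: "((\<lambda>u. x u$3 - x u$1) has_real_derivative 0) (at s within {t0..})"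
    proof (rule has_field_derivative_transform_within[of "\<lambda>u. 0" 0 s "{t0..}" "d - dist s t"])
      show "((\<lambda>u. 0) has_real_derivative 0) (at s within {t0..})" by simp
      show "0 < d - dist s t" "s \<in> {t0..}" using s by auto
      fix u assume u: "u \<in> {t0..}" "dist u s < d - dist s t"
      have "dist u t < d" using u dist_triangle[of u t s] by simp
      then show "0 = x u$3 - x u$1" using eq3[of u] u by simp
    qed
    have "x'$3 - x'$1 = 0" using deriv_unique_Ici[OF _ d1 d0] s by simp
    then show "x s$4 = x s$2" using r1 r3 by simp
  qed (use d in auto)
qed



definition W :: "real \<Rightarrow> real \<Rightarrow> real \<Rightarrow> real \<Rightarrow> real \<Rightarrow> real^4 \<Rightarrow> real" where
  "W m1 m2 k1 k2 e y = V m1 k1 e (y$1) (y$2) + V m2 k2 e (y$3) (y$4)"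

definition goodE :: "real \<Rightarrow> real \<Rightarrow> real \<Rightarrow> real \<Rightarrow> bool" where
  "goodE m c k e \<longleftrightarrow> 0 < e \<and> e \<le> 1 \<and> 4*m*e \<le> k \<and> 4*m*e \<le> c \<and> 2*c*e \<le> k"

lemma goodE_intro:
  assumes "0 < m" "0 < c" "0 < k" "0 < e" "e \<le> 1" "e \<le> k/(4*m)" "e \<le> c/(4*m)" "e \<le> k/(2*c)"
  shows "goodE m c k e"
proof -
  have "e*(4*m) \<le> k" "e*(4*m) \<le> c" "e*(2*c) \<le> k"
    using assms by (simp_all add: pos_le_divide_eq)
  then show ?thesis using assms unfolding goodE_def by (simp add: algebra_simps)
qed

lemma Vsum: "V m1 k1 e p z + V m2 k2 e p z = V (m1+m2) (k1+k2) e p z"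
  by (simp add: V_def algebra_simps add_divide_distrib)

lemma jumpalg:
  assumes "0 < m1" "0 < m2" "w = (m1*p+m2*q)/(m1+m2)"
  shows "V m1 k1 e a w + V m2 k2 e a w \<le> V m1 k1 e a p + V m2 k2 e a q"
proof -
  have X: "m1*p + m2*q = (m1+m2)*w" using assms by simp
  have J: "(m1+m2)*w^2 \<le> m1*p^2 + m2*q^2" using jumpineq[OF assms(1,2), of p q] assms(3) by simp
  have L: "V m1 k1 e a w + V m2 k2 e a w = k1*a^2/2 + k2*a^2/2 + (m1+m2)*w^2/2 + e*a*((m1+m2)*w)"
    by (simp add: V_def algebra_simps)
  have R: "V m1 k1 e a p + V m2 k2 e a q = k1*a^2/2 + k2*a^2/2 + (m1*p^2 + m2*q^2)/2 + e*a*(m1*p+m2*q)"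
    by (simp add: V_def algebra_simps)
  show ?thesis unfolding L R X using J by simp
qed

lemma left_val:
  assumes sol: "is_solution m1 m2 c1 c2 k1 k2 t0 \<sigma> x" and "t0 < t"
  shows "\<exists>i. eventually (\<lambda>s. \<sigma> s = i) (at_left t)"
proof -
  have fin: "finite {u. t0 < u \<and> u \<le> t \<and> \<not> isCont \<sigma> u}" using sol unfolding is_solution_def by blast
  define D where "D = {u. t0 < u \<and> u < t \<and> \<not> isCont \<sigma> u}"
  have fD: "finite D" by (rule finite_subset[OF _ fin]) (auto simp: D_def)
  define a where "a = Max (insert t0 D)"
  have ain: "a \<in> insert t0 D" using fD unfolding a_def by (intro Max_in) auto
  have aD: "\<And>u. u \<in> D \<Longrightarrow> u \<le> a" using fD unfolding a_def by (simp add: Max_ge)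
  have a0: "t0 \<le> a" using fD unfolding a_def by (simp add: Max_ge)
  have at: "a < t" using ain \<open>t0 < t\<close> by (auto simp: D_def)
  have cont: "isCont \<sigma> u" if "a < u" "u < t" for u
  proof (rule ccontr)
    assume "\<not> isCont \<sigma> u"
    then have "u \<in> D" using that a0 by (auto simp: D_def)
    then show False using aD[of u] that by linarith
  qed
  define f where "f = (\<lambda>u. real (\<sigma> u))"
  have "f constant_on {a<..<t}"
  proof (rule continuous_discrete_range_constant)
    show "connected {a<..<t}" by simp
    show "continuous_on {a<..<t} f"
    proof (rule continuous_at_imp_continuous_on, intro ballI)
      fix u assume "u \<in> {a<..<t}"
      then have "eventually (\<lambda>y. \<sigma> y = \<sigma> u) (at u)" using cont[of u] by (simp add: isCont_nat)
      then have "eventually (\<lambda>y. f y = f u) (at u)" unfolding f_def by (auto elim: eventually_mono)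
      then show "isCont f u" unfolding continuous_at by (rule tendsto_eventually)
    qed
    show "\<exists>e>0. \<forall>y. y \<in> {a<..<t} \<and> f y \<noteq> f u \<longrightarrow> e \<le> norm (f y - f u)" for u
      by (rule exI[of _ 1]) (auto simp: f_def intro: natdist)
  qed
  then obtain c where c: "\<forall>u\<in>{a<..<t}. f u = c" by (auto simp: constant_on_def)
  define p where "p = (a+t)/2"
  have p: "p \<in> {a<..<t}" using at by (simp add: p_def)
  have "\<forall>u\<in>{a<..<t}. \<sigma> u = \<sigma> p"
  proof
    fix u assume "u \<in> {a<..<t}"
    then have "f u = f p" using c p by simp
    then show "\<sigma> u = \<sigma> p" by (simp add: f_def)
  qed
  then show ?thesis using eventually_at_left_real[OF at]
    by (intro exI[of _ "\<sigma> p"]) (auto elim: eventually_mono)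
qed

lemma jump_W:
  assumes m: "0 < m1" "0 < m2" and sol: "is_solution m1 m2 c1 c2 k1 k2 t0 \<sigma> x"
    and t: "t0 < t" "\<not> isCont \<sigma> t"
  shows "\<exists>xm. (x \<longlongrightarrow> xm) (at_left t) \<and> (x \<longlongrightarrow> x t) (at_right t) \<and> W m1 m2 k1 k2 e (x t) \<le> W m1 m2 k1 k2 e xm"
proof -
  obtain xm where xm: "(x \<longlongrightarrow> xm) (at_left t)" "(x \<longlongrightarrow> x t) (at_right t)"
    "\<And>i. eventually (\<lambda>s. \<sigma> s = i) (at_left t) \<Longrightarrow> switch_rule m1 m2 i (\<sigma> t) xm (x t)"
    using sol t unfolding is_solution_def by blast
  obtain i where i: "eventually (\<lambda>s. \<sigma> s = i) (at_left t)" using left_val[OF sol t(1)] by blast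
  have sw: "switch_rule m1 m2 i (\<sigma> t) xm (x t)" using xm(3)[OF i] .
  have st: "\<sigma> t \<in> {1,2}" using sol t unfolding is_solution_def by auto
  have "eventually (\<lambda>s. \<sigma> s = i \<and> s \<in> {t0<..<t}) (at_left t)"
    using i eventually_at_left_real[OF t(1)] by (rule eventually_conj)
  then obtain s where s: "\<sigma> s = i" "s \<in> {t0<..<t}" using eventually_happens'[OF trivial_limit_at_left_real] by blast
  have "t0 \<le> s" using s by auto
  then have "\<sigma> s \<in> {1,2}" using sol unfolding is_solution_def by blast
  then have i12: "i \<in> {1,2}" using s by simp
  have ne: "i \<noteq> \<sigma> t"
  proof
    assume "i = \<sigma> t"
    moreover have "eventually (\<lambda>s. \<sigma> s = \<sigma> t) (at_right t)" using sol t unfolding is_solution_def by auto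
    ultimately have "eventually (\<lambda>s. \<sigma> s = \<sigma> t) (at t)" using i by (simp add: eventually_at_split)
    then show False using t(2) by (simp add: isCont_nat)
  qed
  have "W m1 m2 k1 k2 e (x t) \<le> W m1 m2 k1 k2 e xm"
  proof (cases "i = 2")
    case True
    then have "\<sigma> t = 1" using ne st by auto
    then have "x t = xm" using sw True unfolding switch_rule_def by auto
    then show ?thesis by simp
  next
    case False
    then have i1: "i = 1" and s2: "\<sigma> t = 2" using ne st i12 by auto
    then have h: "xm$1 = xm$3" "x t$1 = xm$1" "x t$3 = xm$1"
        "x t$2 = (m1 * xm$2 + m2 * xm$4) / (m1 + m2)" "x t$4 = (m1 * xm$2 + m2 * xm$4) / (m1 + m2)"
      using sw unfolding switch_rule_def by auto
    show ?thesis unfolding W_def h(2,3,5) h(1)[symmetric] h(4)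
      by (rule jumpalg[OF m]) simp
  qed
  then show ?thesis using xm by blast
qed



lemma fin_ineq: "0 < (e::real) \<Longrightarrow> W' \<le> -(e/2)*Q \<Longrightarrow> 4*W0 \<le> 3*Q \<Longrightarrow> 2*e/3*W0 + W' \<le> 0"
proof -
  assume a: "0 < e" "W' \<le> -(e/2)*Q" "4*W0 \<le> 3*Q"
  have "2*e/3*W0 - e/2*Q = e/6*(4*W0 - 3*Q)" by (simp add: algebra_simps)
  moreover have "e/6*(4*W0-3*Q) \<le> 0" using a by (intro mult_nonneg_nonpos) auto
  ultimately show ?thesis using a by linarith
qed

lemma osc_good:
  assumes "0 < m" "0 < c" "0 < k" "goodE m c k e"
  shows "k*p^2 + m*z^2 \<le> 4 * V m k e p z"
    and "4 * V m k e p z \<le> 3*(k*p^2 + m*z^2)"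
    and "k*p*z + z*(-k*p - c*z) + e*m*z^2 + e*p*(-k*p - c*z) \<le> -(e/2)*(k*p^2 + m*z^2)"
  using osc[of m c k e p z] assms unfolding goodE_def by auto

lemma blockder:
  fixes x1' x2' z m k p c e :: real
  assumes r1: "x1' = z" and r2: "m*x2' = -k*p - c*z"
  shows "k*p*x1' + m*z*x2' + e*m*(x1'*z + p*x2') = k*p*z + z*(-k*p - c*z) + e*m*z^2 + e*p*(-k*p - c*z)"
proof -
  have "k*p*x1' + m*z*x2' + e*m*(x1'*z + p*x2') = k*p*z + z*(-k*p - c*z) + e*m*z^2 + e*p*(-k*p - c*z)
        + (z + e*p)*(m*x2' - (-k*p - c*z))"
    unfolding r1 power2_eq_square by algebra
  then show ?thesis using r2 by simp
qed

lemma W_der: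
  assumes pos: "0<m1" "0<m2" "0<c1" "0<c2" "0<k1" "0<k2"
  and g1: "goodE m1 c1 k1 e" and g2: "goodE m2 c2 k2 e" and g3: "goodE (m1+m2) (c1+c2) (k1+k2) e"
  and sol: "is_solution m1 m2 c1 c2 k1 k2 t0 \<sigma> x" and t: "t0 \<le> t" "t = t0 \<or> isCont \<sigma> t"
  shows "\<exists>d. ((\<lambda>s. exp(2*e/3*(s-t0)) * W m1 m2 k1 k2 e (x s)) has_real_derivative d) (at t within {t0..}) \<and> d \<le> 0"
proof -
  have e: "0 < e" using g1 unfolding goodE_def by simp
  obtain x' where x': "(x has_vector_derivative x') (at t within {t0..})"
    "EE m1 m2 (\<sigma> t) *v x' = AA c1 c2 k1 k2 (\<sigma> t) *v x t"
    using sol_der[OF sol t] by blast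
  have st: "\<sigma> t \<in> {1,2}" using sol t unfolding is_solution_def by auto
  have d1: "((\<lambda>s. x s $ 1) has_real_derivative x'$1) (at t within {t0..})"
    and d2: "((\<lambda>s. x s $ 2) has_real_derivative x'$2) (at t within {t0..})"
    and d3: "((\<lambda>s. x s $ 3) has_real_derivative x'$3) (at t within {t0..})"
    and d4: "((\<lambda>s. x s $ 4) has_real_derivative x'$4) (at t within {t0..})"
    by (rule comp_der[OF x'(1)])+
  define E where "E = exp(2*e/3*(t-t0))"
  have E: "0 < E" by (simp add: E_def)
  show ?thesis
  proof (cases "\<sigma> t = 1")
    case True
    have eq: "EE m1 m2 1 *v x' = AA c1 c2 k1 k2 1 *v x t" using x'(2) True by simp
    have r1: "x'$1 = x t$2" using arg_cong[OF eq, of "\<lambda>v. v$1"] unfolding E1 A1 by simp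
    have r2: "m1*x'$2 = -k1*x t$1 - c1*x t$2" using arg_cong[OF eq, of "\<lambda>v. v$2"] unfolding E1 A1 by simp
    have r3: "x'$3 = x t$4" using arg_cong[OF eq, of "\<lambda>v. v$3"] unfolding E1 A1 by simp
    have r4: "m2*x'$4 = -k2*x t$3 - c2*x t$4" using arg_cong[OF eq, of "\<lambda>v. v$4"] unfolding E1 A1 by simp
    define W' where "W' = (k1*x t$1*x'$1 + m1*x t$2*x'$2 + e*m1*(x'$1*x t$2 + x t$1*x'$2))
                       + (k2*x t$3*x'$3 + m2*x t$4*x'$4 + e*m2*(x'$3*x t$4 + x t$3*x'$4))"
    have D: "((\<lambda>s. exp(2*e/3*(s-t0)) * W m1 m2 k1 k2 e (x s)) has_real_derivative
              (E * (2*e/3) * W m1 m2 k1 k2 e (x t) + E * W')) (at t within {t0..})"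
      unfolding W_def V_def
      by (rule derivative_eq_intros d1 d2 d3 d4 refl | simp)+
        (simp add: E_def W'_def algebra_simps power2_eq_square)
    have b1: "W' = (k1*x t$1*x t$2 + x t$2*(-k1*x t$1 - c1*x t$2) + e*m1*(x t$2)^2 + e*x t$1*(-k1*x t$1 - c1*x t$2))
                 + (k2*x t$3*x t$4 + x t$4*(-k2*x t$3 - c2*x t$4) + e*m2*(x t$4)^2 + e*x t$3*(-k2*x t$3 - c2*x t$4))"
      unfolding W'_def blockder[OF r1 r2] blockder[OF r3 r4] ..
    have "W' \<le> -(e/2)*((k1*(x t$1)^2 + m1*(x t$2)^2) + (k2*(x t$3)^2 + m2*(x t$4)^2))"
      unfolding b1 using osc_good(3)[OF pos(1,3,5) g1, of "x t$1" "x t$2"] osc_good(3)[OF pos(2,4,6) g2, of "x t$3" "x t$4"]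
      by (simp add: algebra_simps)
    moreover have "4 * W m1 m2 k1 k2 e (x t) \<le> 3*((k1*(x t$1)^2 + m1*(x t$2)^2) + (k2*(x t$3)^2 + m2*(x t$4)^2))"
      unfolding W_def using osc_good(2)[OF pos(1,3,5) g1, of "x t$1" "x t$2"] osc_good(2)[OF pos(2,4,6) g2, of "x t$3" "x t$4"]
      by (simp add: algebra_simps)
    ultimately have "2*e/3*W m1 m2 k1 k2 e (x t) + W' \<le> 0" by (rule fin_ineq[OF e])
    then have "E * (2*e/3*W m1 m2 k1 k2 e (x t) + W') \<le> 0" using E by (simp add: mult_nonneg_nonpos)
    then show ?thesis using D by (intro exI[of _ "E * (2*e/3) * W m1 m2 k1 k2 e (x t) + E * W'"]) (simp add: algebra_simps)
  next
    case False
    then have s2: "\<sigma> t = 2" using st by auto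
    obtain d where d: "d > 0" "\<forall>s. t0 \<le> s \<and> dist s t < d \<longrightarrow> x s$3 = x s$1 \<and> x s$4 = x s$2"
      using mode2_nbhd[OF sol t s2] by blast
    have eq: "EE m1 m2 2 *v x' = AA c1 c2 k1 k2 2 *v x t" using x'(2) s2 by simp
    have r1: "x'$1 = x t$2" using arg_cong[OF eq, of "\<lambda>v. v$1"] unfolding E2 A2 by simp
    have r2: "(m1+m2)*x'$2 = -(k1+k2)*x t$1 - (c1+c2)*x t$2" using arg_cong[OF eq, of "\<lambda>v. v$2"] unfolding E2 A2 by simp
    define W' where "W' = (k1+k2)*x t$1*x'$1 + (m1+m2)*x t$2*x'$2 + e*(m1+m2)*(x'$1*x t$2 + x t$1*x'$2)"
    have D: "((\<lambda>s. exp(2*e/3*(s-t0)) * V (m1+m2) (k1+k2) e (x s$1) (x s$2)) has_real_derivative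
              (E * (2*e/3) * V (m1+m2) (k1+k2) e (x t$1) (x t$2) + E * W')) (at t within {t0..})"
      unfolding V_def
      by (rule derivative_eq_intros d1 d2 refl | simp)+
        (simp add: E_def W'_def algebra_simps power2_eq_square)
    have WV: "W m1 m2 k1 k2 e (x s) = V (m1+m2) (k1+k2) e (x s$1) (x s$2)" if "t0 \<le> s" "dist s t < d" for s
      using d(2) that unfolding W_def by (simp add: Vsum)
    have D': "((\<lambda>s. exp(2*e/3*(s-t0)) * W m1 m2 k1 k2 e (x s)) has_real_derivative
              (E * (2*e/3) * V (m1+m2) (k1+k2) e (x t$1) (x t$2) + E * W')) (at t within {t0..})"
      by (rule has_field_derivative_transform_within[OF D d(1)]) (use t WV in auto)
    have b1: "W' = (k1+k2)*x t$1*x t$2 + x t$2*(-(k1+k2)*x t$1 - (c1+c2)*x t$2) + e*(m1+m2)*(x t$2)^2 + e*x t$1*(-(k1+k2)*x t$1 - (c1+c2)*x t$2)"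
      unfolding W'_def blockder[OF r1 r2] ..
    have pos3: "0 < m1+m2" "0 < c1+c2" "0 < k1+k2" using pos by auto
    have "W' \<le> -(e/2)*((k1+k2)*(x t$1)^2 + (m1+m2)*(x t$2)^2)"
      unfolding b1 using osc_good(3)[OF pos3 g3, of "x t$1" "x t$2"] by simp
    moreover have "4 * V (m1+m2) (k1+k2) e (x t$1) (x t$2) \<le> 3*((k1+k2)*(x t$1)^2 + (m1+m2)*(x t$2)^2)"
      using osc_good(2)[OF pos3 g3, of "x t$1" "x t$2"] by simp
    ultimately have "2*e/3*V (m1+m2) (k1+k2) e (x t$1) (x t$2) + W' \<le> 0" by (rule fin_ineq[OF e])
    then have "E * (2*e/3*V (m1+m2) (k1+k2) e (x t$1) (x t$2) + W') \<le> 0" using E by (simp add: mult_nonneg_nonpos)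
    then show ?thesis using D' by (intro exI[of _ "E * (2*e/3) * V (m1+m2) (k1+k2) e (x t$1) (x t$2) + E * W'"]) (simp add: algebra_simps)
  qed
qed



lemma g_lim:
  assumes "(x \<longlongrightarrow> y) F" "((\<lambda>s. s) \<longlongrightarrow> t) F"
  shows "((\<lambda>s. exp(a*(s-t0)) * W m1 m2 k1 k2 e (x s)) \<longlongrightarrow> exp(a*(t-t0)) * W m1 m2 k1 k2 e y) F"
  unfolding W_def V_def by (intro tendsto_intros assms) auto

lemma W_bounds:
  assumes pos: "0<m1" "0<m2" "0<c1" "0<c2" "0<k1" "0<k2"
  and g1: "goodE m1 c1 k1 e" and g2: "goodE m2 c2 k2 e"
  shows "min (min k1 m1) (min k2 m2) * norm y ^ 2 \<le> 4 * W m1 m2 k1 k2 e y"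
    and "4 * W m1 m2 k1 k2 e y \<le> 3 * max (max k1 m1) (max k2 m2) * norm y ^ 2"
proof -
  define Q where "Q = k1*(y$1)^2 + m1*(y$2)^2 + (k2*(y$3)^2 + m2*(y$4)^2)"
  have n: "norm y ^ 2 = (y$1)^2 + (y$2)^2 + (y$3)^2 + (y$4)^2"
    by (simp add: norm_vec_def L2_set_def sum_4)
  have W1: "Q \<le> 4 * W m1 m2 k1 k2 e y"
    using osc_good(1)[OF pos(1,3,5) g1, of "y$1" "y$2"] osc_good(1)[OF pos(2,4,6) g2, of "y$3" "y$4"]
    unfolding Q_def W_def by simp
  have W2: "4 * W m1 m2 k1 k2 e y \<le> 3 * Q"
    using osc_good(2)[OF pos(1,3,5) g1, of "y$1" "y$2"] osc_good(2)[OF pos(2,4,6) g2, of "y$3" "y$4"]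
    unfolding Q_def W_def by simp
  define lo where "lo = min (min k1 m1) (min k2 m2)"
  define hi where "hi = max (max k1 m1) (max k2 m2)"
  have l: "lo * (y$i)^2 \<le> c * (y$i)^2" if "lo \<le> c" for c i
    using that by (intro mult_right_mono) auto
  have h: "c * (y$i)^2 \<le> hi * (y$i)^2" if "c \<le> hi" for c i
    using that by (intro mult_right_mono) auto
  have lb: "lo \<le> k1" "lo \<le> m1" "lo \<le> k2" "lo \<le> m2" by (simp_all add: lo_def)
  have "lo * norm y ^ 2 \<le> Q"
    unfolding n Q_def distrib_left
    using l[OF lb(1), of 1] l[OF lb(2), of 2] l[OF lb(3), of 3] l[OF lb(4), of 4] by linarith
  then show "min (min k1 m1) (min k2 m2) * norm y ^ 2 \<le> 4 * W m1 m2 k1 k2 e y"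
    using W1 unfolding lo_def by linarith
  have hb: "k1 \<le> hi" "m1 \<le> hi" "k2 \<le> hi" "m2 \<le> hi" by (simp_all add: hi_def)
  have "Q \<le> hi * norm y ^ 2"
    unfolding n Q_def distrib_left
    using h[OF hb(1), of 1] h[OF hb(2), of 2] h[OF hb(3), of 3] h[OF hb(4), of 4] by linarith
  then show "4 * W m1 m2 k1 k2 e y \<le> 3 * max (max k1 m1) (max k2 m2) * norm y ^ 2"
    using W2 unfolding hi_def by linarith
qed

theorem mainTheorem11:
  fixes m1 m2 c1 c2 k1 k2 :: real
  assumes "m1 > 0" "m2 > 0" "c1 > 0" "c2 > 0" "k1 > 0" "k2 > 0"
  shows "GUES m1 m2 c1 c2 k1 k2"
proof -
  note pos = assms
  define f :: "real \<Rightarrow> real \<Rightarrow> real \<Rightarrow> real" where "f = (\<lambda>m c k. min (k/(4*m)) (min (c/(4*m)) (k/(2*c))))"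
  have fpos: "0 < f m c k" if "0<m" "0<c" "0<k" for m c k using that by (simp add: f_def)
  define e where "e = min 1 (min (f m1 c1 k1) (min (f m2 c2 k2) (f (m1+m2) (c1+c2) (k1+k2))))"
  have e0: "0 < e" unfolding e_def using fpos pos by simp
  have e1: "e \<le> 1" "e \<le> f m1 c1 k1" "e \<le> f m2 c2 k2" "e \<le> f (m1+m2) (c1+c2) (k1+k2)"
    unfolding e_def by (simp_all add: min_le_iff_disj)
  have gI: "goodE m c k e" if "0<m" "0<c" "0<k" "e \<le> f m c k" for m c k
  proof -
    have "f m c k \<le> k/(4*m)" "f m c k \<le> c/(4*m)" "f m c k \<le> k/(2*c)" by (simp_all add: f_def)
    then show ?thesis using that e0 e1(1) by (intro goodE_intro) linarith+
  qed
  have g1: "goodE m1 c1 k1 e" by (rule gI) (use pos e1 in auto)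
  have g2: "goodE m2 c2 k2 e" by (rule gI) (use pos e1 in auto)
  have g3: "goodE (m1+m2) (c1+c2) (k1+k2) e" by (rule gI) (use pos e1 in auto)
  define lo where "lo = min (min k1 m1) (min k2 m2)"
  define hi where "hi = max (max k1 m1) (max k2 m2)"
  have lo: "0 < lo" using pos by (simp add: lo_def)
  have hi: "0 < hi" using pos by (simp add: hi_def)
  define r where "r = 2*e/3"
  show ?thesis
    unfolding GUES_def
  proof (rule exI[of _ "sqrt (3*hi/lo)"], rule conjI)
    show "0 < sqrt (3*hi/lo)" using lo hi by simp
    show "\<exists>\<alpha>>0. \<forall>t0 \<sigma> x. is_solution m1 m2 c1 c2 k1 k2 t0 \<sigma> x \<longrightarrow>
        (\<forall>t\<ge>t0. norm (x t) \<le> sqrt (3*hi/lo) * exp (- \<alpha> * (t - t0)) * norm (x t0))"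
  proof (rule exI[of _ "e/3"], rule conjI)
    show "0 < e/3" using e0 by simp
    show "\<forall>t0 \<sigma> x. is_solution m1 m2 c1 c2 k1 k2 t0 \<sigma> x \<longrightarrow>
        (\<forall>t\<ge>t0. norm (x t) \<le> sqrt (3*hi/lo) * exp (- (e/3) * (t - t0)) * norm (x t0))"
  proof (intro allI impI)
    fix t0 \<sigma> x t assume sol: "is_solution m1 m2 c1 c2 k1 k2 t0 \<sigma> x" and t: "t0 \<le> t"
    define g where "g = (\<lambda>s. exp(r*(s-t0)) * W m1 m2 k1 k2 e (x s))"
    have mono: "g t \<le> g t0"
    proof (rule jump_mono[where P = "\<lambda>u. \<not> isCont \<sigma> u" and g=g and a=t0 and t=t])
      show "finite {t. t0 < t \<and> t \<le> T \<and> \<not> isCont \<sigma> t}" for T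
        using sol unfolding is_solution_def by blast
      show "\<exists>d. (g has_real_derivative d) (at s within {t0..}) \<and> d \<le> 0"
        if "t0 \<le> s" "s = t0 \<or> \<not> \<not> isCont \<sigma> s" for s
        using W_der[OF pos g1 g2 g3 sol, of s] that unfolding g_def r_def by auto
      show "(g \<longlongrightarrow> g s) (at_right s) \<and> (\<exists>L. (g \<longlongrightarrow> L) (at_left s) \<and> g s \<le> L)"
        if ts: "t0 < s" "\<not> isCont \<sigma> s" for s
      proof -
        obtain xm where xm: "(x \<longlongrightarrow> xm) (at_left s)" "(x \<longlongrightarrow> x s) (at_right s)"
          "W m1 m2 k1 k2 e (x s) \<le> W m1 m2 k1 k2 e xm"
          using jump_W[OF pos(1,2) sol ts] by blast
        have "(g \<longlongrightarrow> g s) (at_right s)" unfolding g_def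
          by (rule g_lim[OF xm(2)]) (intro tendsto_intros)
        moreover have "(g \<longlongrightarrow> exp(r*(s-t0)) * W m1 m2 k1 k2 e xm) (at_left s)" unfolding g_def
          by (rule g_lim[OF xm(1)]) (intro tendsto_intros)
        moreover have "g s \<le> exp(r*(s-t0)) * W m1 m2 k1 k2 e xm"
          unfolding g_def using xm(3) by simp
        ultimately show ?thesis by blast
      qed
    qed (rule t)
    define ex where "ex = exp (- r * (t - t0))"
    have ex: "0 < ex" by (simp add: ex_def)
    have Wt: "W m1 m2 k1 k2 e (x t) \<le> ex * W m1 m2 k1 k2 e (x t0)"
    proof -
      have "exp(r*(t-t0)) * W m1 m2 k1 k2 e (x t) \<le> W m1 m2 k1 k2 e (x t0)"
        using mono unfolding g_def by simp
      then have "ex * (exp(r*(t-t0)) * W m1 m2 k1 k2 e (x t)) \<le> ex * W m1 m2 k1 k2 e (x t0)"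
        using ex by (intro mult_left_mono) auto
      moreover have "ex * exp(r*(t-t0)) = 1" unfolding ex_def exp_add[symmetric] by simp
      ultimately show ?thesis by (simp add: mult.assoc[symmetric])
    qed
    have A: "lo * norm (x t) ^ 2 \<le> 4 * W m1 m2 k1 k2 e (x t)"
      using W_bounds(1)[OF pos g1 g2] unfolding lo_def .
    have C: "4 * W m1 m2 k1 k2 e (x t0) \<le> 3 * hi * norm (x t0) ^ 2"
      using W_bounds(2)[OF pos g1 g2] unfolding hi_def .
    have "ex * (4 * W m1 m2 k1 k2 e (x t0)) \<le> ex * (3 * hi * norm (x t0) ^ 2)"
      using C ex by (intro mult_left_mono) auto
    then have "lo * norm (x t) ^ 2 \<le> ex * (3 * hi * norm (x t0) ^ 2)"
      using A Wt by linarith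
    then have sq: "norm (x t) ^ 2 \<le> ex * (3 * hi * norm (x t0) ^ 2) / lo"
      using lo by (simp add: pos_le_divide_eq mult.commute)
    have eq: "(sqrt (3*hi/lo) * exp (- (e/3) * (t - t0)) * norm (x t0)) ^ 2 = ex * (3 * hi * norm (x t0) ^ 2) / lo"
    proof -
      have "(exp (- (e/3) * (t - t0)))^2 = ex"
        unfolding ex_def r_def exp_double[symmetric] by (simp add: algebra_simps)
      moreover have "(sqrt (3*hi/lo))^2 = 3*hi/lo" using lo hi by simp
      ultimately show ?thesis by (simp add: power_mult_distrib)
    qed
    show "norm (x t) \<le> sqrt (3*hi/lo) * exp (- (e/3) * (t - t0)) * norm (x t0)"
      by (rule power2_le_imp_le) (use sq eq lo hi in auto)
  qed
  qed
  qed
qed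

end
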